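(* For every integer $n\ge 3$, $$m^*(n,3)\le \left\lceil \frac{3}{\log_2 3}\log_2 n\right\rceil.$$
   Context: For a binary matrix $M$ and a nonempty set $S$ of its columns, $S$ is a stopping set if the submatrix formed by $S$ has no row with exactly one $1$; $s(M)$ is the minimum size of a stopping set ($+\infty$ if none). $M$ is $d$-decodable if $s(M)\ge d+1$. $m^*(n,d)$ is the minimum $m$ such that an $m\times n$ $d$-decodable binary matrix exists. *)

theory Defs
  imports Complex_Main "HOL-Library.Extended_Nat"
begin

text \<open>An m x n binary matrix is represented as M :: nat => nat => bool, where
  M i j (for i < m, j < n) is the entry in row i, column j (True = 1).
  Entries outside the range are irrelevant to all definitions below.\<close>

definition stopping_set :: "nat \<Rightarrow> nat \<Rightarrow> (nat \<Rightarrow> nat \<Rightarrow> bool) \<Rightarrow> nat set \<Rightarrow> bool" where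
  "stopping_set m n M S \<longleftrightarrow>
     S \<subseteq> {..<n} \<and> S \<noteq> {} \<and>
     (\<forall>i<m. card {j\<in>S. M i j} \<noteq> 1)"

text \<open>Minimum size of a stopping set; infinity if none exists (Inf of the empty
  set of extended naturals is infinity).\<close>
definition stop_dist :: "nat \<Rightarrow> nat \<Rightarrow> (nat \<Rightarrow> nat \<Rightarrow> bool) \<Rightarrow> enat" where
  "stop_dist m n M = Inf {enat (card S) | S. stopping_set m n M S}"

definition decodable :: "nat \<Rightarrow> nat \<Rightarrow> nat \<Rightarrow> (nat \<Rightarrow> nat \<Rightarrow> bool) \<Rightarrow> bool" where
  "decodable m n d M \<longleftrightarrow> stop_dist m n M \<ge> enat (d + 1)"

definition m_star :: "nat \<Rightarrow> nat \<Rightarrow> nat" where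
  "m_star n d = (LEAST m. \<exists>M. decodable m n d M)"

end

theory Submission
  imports Defs
begin

definition blk :: "nat list \<Rightarrow> nat \<Rightarrow> nat \<Rightarrow> bool" where
  "blk cs i j = odd (cs ! j div 2 ^ i)"

definition ex1 :: "bool \<Rightarrow> bool \<Rightarrow> bool \<Rightarrow> bool" where
  "ex1 a b c = ((a \<and> \<not> b \<and> \<not> c) \<or> (\<not> a \<and> b \<and> \<not> c) \<or> (\<not> a \<and> \<not> b \<and> c))"

definition tf :: "nat \<Rightarrow> nat \<Rightarrow> (nat \<Rightarrow> nat \<Rightarrow> bool) \<Rightarrow> bool" where
  "tf m n M \<longleftrightarrow> (\<forall>x<n. \<exists>i<m. M i x) \<and>
     (\<forall>x<n. \<forall>y<n. x \<noteq> y \<longrightarrow> (\<exists>i<m. M i x \<noteq> M i y)) \<and>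
     (\<forall>x<n. \<forall>y<n. \<forall>z<n. x \<noteq> y \<and> y \<noteq> z \<and> x \<noteq> z \<longrightarrow> (\<exists>i<m. ex1 (M i x) (M i y) (M i z)))"

definition tfl :: "nat \<Rightarrow> nat \<Rightarrow> (nat \<Rightarrow> nat \<Rightarrow> bool) \<Rightarrow> bool" where
  "tfl m n M \<longleftrightarrow> list_all (\<lambda>x. list_ex (\<lambda>i. M i x) [0..<m]) [0..<n] \<and>
     list_all (\<lambda>x. list_all (\<lambda>y. x = y \<or> list_ex (\<lambda>i. M i x \<noteq> M i y) [0..<m]) [0..<n]) [0..<n] \<and>
     list_all (\<lambda>x. list_all (\<lambda>y. list_all (\<lambda>z. x = y \<or> y = z \<or> x = z \<or>
        list_ex (\<lambda>i. ex1 (M i x) (M i y) (M i z)) [0..<m]) [0..<n]) [0..<n]) [0..<n]"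

lemma tfl_tf: assumes "tfl m n M" shows "tf m n M"
proof -
  have A: "list_all (\<lambda>x. list_ex (\<lambda>i. M i x) [0..<m]) [0..<n]"
    and B: "list_all (\<lambda>x. list_all (\<lambda>y. x = y \<or> list_ex (\<lambda>i. M i x \<noteq> M i y) [0..<m]) [0..<n]) [0..<n]"
    and C: "list_all (\<lambda>x. list_all (\<lambda>y. list_all (\<lambda>z. x = y \<or> y = z \<or> x = z \<or>
        list_ex (\<lambda>i. ex1 (M i x) (M i y) (M i z)) [0..<m]) [0..<n]) [0..<n]) [0..<n]"
    using assms unfolding tfl_def by auto
  show ?thesis unfolding tf_def
  proof (intro conjI allI impI)
    fix x assume x: "x < n"
    then have xs: "x \<in> set [0..<n]" by simp
    have "list_ex (\<lambda>i. M i x) [0..<m]" using bspec[OF A[unfolded list_all_iff] xs] by simp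
    then show "\<exists>i<m. M i x" unfolding list_ex_iff by auto
  next
    fix x y assume x: "x < n" and y: "y < n" and d: "x \<noteq> y"
    then have xs: "x \<in> set [0..<n]" "y \<in> set [0..<n]" by simp_all
    have B1: "\<forall>y\<in>set [0..<n]. x = y \<or> list_ex (\<lambda>i. M i x \<noteq> M i y) [0..<m]"
      using bspec[OF B[unfolded list_all_iff] xs(1)] by (simp only: list_all_iff)
    have "x = y \<or> list_ex (\<lambda>i. M i x \<noteq> M i y) [0..<m]"
      using bspec[OF B1 xs(2)] by simp
    then show "\<exists>i<m. M i x \<noteq> M i y" using d unfolding list_ex_iff by auto
  next
    fix x y z assume x: "x < n" and y: "y < n" and z: "z < n" and d: "x \<noteq> y \<and> y \<noteq> z \<and> x \<noteq> z"
    then have xs: "x \<in> set [0..<n]" "y \<in> set [0..<n]" "z \<in> set [0..<n]" by simp_all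
    have C1: "\<forall>y\<in>set [0..<n]. list_all (\<lambda>z. x = y \<or> y = z \<or> x = z \<or>
        list_ex (\<lambda>i. ex1 (M i x) (M i y) (M i z)) [0..<m]) [0..<n]"
      using bspec[OF C[unfolded list_all_iff] xs(1)] by (simp only: list_all_iff)
    have C2: "\<forall>z\<in>set [0..<n]. x = y \<or> y = z \<or> x = z \<or>
        list_ex (\<lambda>i. ex1 (M i x) (M i y) (M i z)) [0..<m]"
      using bspec[OF C1 xs(2)] by (simp only: list_all_iff)
    have "x = y \<or> y = z \<or> x = z \<or> list_ex (\<lambda>i. ex1 (M i x) (M i y) (M i z)) [0..<m]"
      using bspec[OF C2 xs(3)] by simp
    then show "\<exists>i<m. ex1 (M i x) (M i y) (M i z)" using d unfolding list_ex_iff by auto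
  qed
qed

lemma b4: "tf 4 5 (blk [1,2,4,7,8])"
proof -
  have "tfl 4 5 (blk [1,2,4,7,8])" by code_simp
  thus ?thesis by (rule tfl_tf)
qed

lemma b5: "tf 5 7 (blk [1,2,4,7,8,11,16])"
proof -
  have "tfl 5 7 (blk [1,2,4,7,8,11,16])" by code_simp
  thus ?thesis by (rule tfl_tf)
qed

lemma b3: "tf 3 3 (\<lambda>i j. i = j)"
  unfolding tf_def ex1_def by auto

lemma card1: "card {j\<in>{x}. P j} = 1 \<longleftrightarrow> P x"
proof -
  have e: "{j\<in>{x}. P j} = (if P x then {x} else {})" by auto
  show ?thesis unfolding e by simp
qed

lemma card2: "x \<noteq> y \<Longrightarrow> card {j\<in>{x,y}. P j} = 1 \<longleftrightarrow> P x \<noteq> P y"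
proof -
  assume d: "x \<noteq> y"
  have e: "{j\<in>{x,y}. P j} = (if P x then {x} else {}) \<union> (if P y then {y} else {})"
    by auto
  show ?thesis unfolding e
    using d by (cases "P x"; cases "P y") (auto simp: card_insert_if)
qed

lemma card3: "x \<noteq> y \<Longrightarrow> y \<noteq> z \<Longrightarrow> x \<noteq> z \<Longrightarrow>
   card {j\<in>{x,y,z}. P j} = 1 \<longleftrightarrow> ex1 (P x) (P y) (P z)"
proof -
  assume d: "x \<noteq> y" "y \<noteq> z" "x \<noteq> z"
  have e: "{j\<in>{x,y,z}. P j} = (if P x then {x} else {}) \<union> (if P y then {y} else {}) \<union> (if P z then {z} else {})"
    by auto
  show ?thesis unfolding e ex1_def
    using d by (cases "P x"; cases "P y"; cases "P z") (auto simp: card_insert_if)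
qed

lemma tf_dec: assumes "tf m n M" shows "decodable m n 3 M"
  unfolding decodable_def stop_dist_def
proof (rule Inf_greatest, clarify)
  fix S assume st: "stopping_set m n M S"
  then have sub: "S \<subseteq> {..<n}" and ne: "S \<noteq> {}" and rows: "\<forall>i<m. card {j\<in>S. M i j} \<noteq> 1"
    unfolding stopping_set_def by auto
  have fin: "finite S" using sub finite_subset by blast
  have "\<not> card S \<le> 3"
  proof
    assume c: "card S \<le> 3"
    have "card S \<noteq> 0" using fin ne by simp
    then have "card S = 1 \<or> card S = 2 \<or> card S = 3" using c by linarith
    then show False
    proof (elim disjE)
      assume "card S = 1"
      then obtain x where S: "S = {x}" by (auto simp: card_1_singleton_iff)
      then have "x < n" using sub by auto
      then obtain i where "i < m" "M i x" using assms unfolding tf_def by blast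
      then show False using rows S card1[of x "M i"] by auto
    next
      assume "card S = 2"
      then obtain x y where S: "S = {x,y}" "x \<noteq> y" by (auto simp: card_2_iff)
      then have "x < n" "y < n" using sub by auto
      then obtain i where "i < m" "M i x \<noteq> M i y" using assms S unfolding tf_def by blast
      then show False using rows S card2[of x y "M i"] by auto
    next
      assume "card S = 3"
      then obtain x y z where S: "S = {x,y,z}" "x \<noteq> y" "y \<noteq> z" "x \<noteq> z" by (auto simp: card_3_iff)
      then have "x < n" "y < n" "z < n" using sub by auto
      then obtain i where "i < m" "ex1 (M i x) (M i y) (M i z)" using assms S unfolding tf_def by blast
      then show False using rows S card3[of x y z "M i"] by auto
    qed
  qed
  then show "enat (3 + 1) \<le> enat (card S)" by simp
qed

definition ext :: "nat \<Rightarrow> (nat \<Rightarrow> nat \<Rightarrow> bool) \<Rightarrow> nat \<Rightarrow> nat \<Rightarrow> bool" where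
  "ext n B i j = (if i < 3 then j div n = i else B (i - 3) (j mod n))"

lemma ext_tf: assumes B: "tf m n B" shows "tf (m + 3) (3 * n) (ext n B)"
proof -
  have low: "ext n B (x div n) y = (y div n = x div n)" if "x < 3 * n" for x y
    using that by (auto simp: ext_def less_mult_imp_div_less mult.commute)
  have lowlt: "x div n < m + 3" if "x < 3 * n" for x
    using that by (simp add: less_mult_imp_div_less mult.commute add.commute trans_less_add2)
  have high: "ext n B (i + 3) x = B i (x mod n)" for i x by (simp add: ext_def)
  have modlt: "x mod n < n" if "x < 3 * n" for x using that by auto
  have modne: "x mod n \<noteq> y mod n" if "x div n = y div n" "x \<noteq> y" for x y
    using that by (metis div_mult_mod_eq)
  show ?thesis unfolding tf_def
  proof (intro conjI allI impI)
    fix x assume x: "x < 3 * n"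
    show "\<exists>i<m + 3. ext n B i x" using low[OF x, of x] lowlt[OF x] by blast
  next
    fix x y assume x: "x < 3 * n" and y: "y < 3 * n" and d: "x \<noteq> y"
    show "\<exists>i<m + 3. ext n B i x \<noteq> ext n B i y"
    proof (cases "x div n = y div n")
      case True
      then obtain i where "i < m" "B i (x mod n) \<noteq> B i (y mod n)"
        using B modlt[OF x] modlt[OF y] modne[OF True d] unfolding tf_def by blast
      then show ?thesis
        by (intro exI[of _ "i + 3"]) (simp add: high)
    next
      case False
      then show ?thesis using low[OF x, of x] low[OF x, of y] lowlt[OF x] by auto
    qed
  next
    fix x y z assume x: "x < 3 * n" and y: "y < 3 * n" and z: "z < 3 * n"
      and d: "x \<noteq> y \<and> y \<noteq> z \<and> x \<noteq> z"
    show "\<exists>i<m + 3. ex1 (ext n B i x) (ext n B i y) (ext n B i z)"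
    proof (cases "x div n = y div n \<and> y div n = z div n")
      case True
      have B3: "\<forall>x<n. \<forall>y<n. \<forall>z<n. x \<noteq> y \<and> y \<noteq> z \<and> x \<noteq> z \<longrightarrow> (\<exists>i<m. ex1 (B i x) (B i y) (B i z))"
        using B unfolding tf_def by blast
      have dd: "x mod n \<noteq> y mod n \<and> y mod n \<noteq> z mod n \<and> x mod n \<noteq> z mod n"
        using True d modne[of x y] modne[of y z] modne[of x z] by auto
      obtain i where "i < m" "ex1 (B i (x mod n)) (B i (y mod n)) (B i (z mod n))"
        using B3 modlt[OF x] modlt[OF y] modlt[OF z] dd by blast
      then show ?thesis
        by (intro exI[of _ "i + 3"]) (simp add: high)
    next
      case False
      then consider "x div n \<noteq> y div n \<and> x div n \<noteq> z div n"
        | "y div n \<noteq> x div n \<and> y div n \<noteq> z div n"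
        | "z div n \<noteq> x div n \<and> z div n \<noteq> y div n" by metis
      then show ?thesis
      proof cases
        case 1 then show ?thesis using low[OF x, of x] low[OF x, of y] low[OF x, of z] lowlt[OF x]
          by (auto simp: ex1_def)
      next
        case 2 then show ?thesis using low[OF y, of x] low[OF y, of y] low[OF y, of z] lowlt[OF y]
          by (auto simp: ex1_def)
      next
        case 3 then show ?thesis using low[OF z, of x] low[OF z, of y] low[OF z, of z] lowlt[OF z]
          by (auto simp: ex1_def)
      qed
    qed
  qed
qed

lemma iter_tf: "tf m n M \<Longrightarrow> \<exists>M'. tf (3 * k + m) (3 ^ k * n) M'"
proof (induction k)
  case 0 then show ?case by auto
next
  case (Suc k)
  then obtain M' where "tf (3 * k + m) (3 ^ k * n) M'" by blast
  from ext_tf[OF this] show ?case by (auto simp: algebra_simps)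
qed

lemma tf_mono: assumes "tf m N M" "n \<le> N" shows "tf m n M"
  unfolding tf_def
proof (intro conjI allI impI)
  fix x assume "x < n" then have "x < N" using assms(2) by simp
  then show "\<exists>i<m. M i x" using assms(1) unfolding tf_def by blast
next
  fix x y assume "x < n" "y < n" "x \<noteq> y"
  then have "x < N" "y < N" "x \<noteq> y" using assms(2) by simp_all
  then show "\<exists>i<m. M i x \<noteq> M i y" using assms(1) unfolding tf_def by blast
next
  fix x y z assume "x < n" "y < n" "z < n" "x \<noteq> y \<and> y \<noteq> z \<and> x \<noteq> z"
  then have "x < N" "y < N" "z < N" "x \<noteq> y \<and> y \<noteq> z \<and> x \<noteq> z" using assms(2) by simp_all
  then show "\<exists>i<m. ex1 (M i x) (M i y) (M i z)" using assms(1) unfolding tf_def by blast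
qed

lemma construct:
  fixes n c :: nat
  assumes c3: "c \<ge> 3" and pw: "n ^ 3 \<le> 3 ^ c"
  shows "\<exists>M. decodable c n 3 M"
proof -
  define k where "k = (c - 3) div 3"
  define r where "r = c - 3 * k"
  have dm: "3 * k + (c - 3) mod 3 = c - 3" unfolding k_def by simp
  have rdef: "r = (c - 3) mod 3 + 3" unfolding r_def using dm c3 by linarith
  have "(c - 3) mod 3 < 3" by simp
  then have "(c - 3) mod 3 = 0 \<or> (c - 3) mod 3 = 1 \<or> (c - 3) mod 3 = 2" by linarith
  then have rr: "r = 3 \<or> r = 4 \<or> r = 5" using rdef by auto
  have "\<exists>nr B. tf r nr B \<and> 3 ^ r \<le> nr ^ 3"
    using rr
  proof (elim disjE)
    assume "r = 3" then show ?thesis using b3 by (intro exI[of _ 3] exI[of _ "\<lambda>i j. i = j"]) simp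
  next
    assume "r = 4" then show ?thesis using b4 by (intro exI[of _ 5] exI[of _ "blk [1,2,4,7,8]"]) simp
  next
    assume "r = 5" then show ?thesis using b5 by (intro exI[of _ 7] exI[of _ "blk [1,2,4,7,8,11,16]"]) simp
  qed
  then obtain nr B where B: "tf r nr B" and nb: "3 ^ r \<le> nr ^ 3" by blast
  obtain M where M: "tf (3 * k + r) (3 ^ k * nr) M" using iter_tf[OF B] by blast
  have ceq: "3 * k + r = c" using rdef dm c3 by linarith
  have "n ^ 3 \<le> 3 ^ (3 * k + r)" using pw ceq by simp
  also have "\<dots> = (3 ^ k) ^ 3 * 3 ^ r" by (simp add: power_add flip: power_mult)
  also have "\<dots> \<le> (3 ^ k) ^ 3 * nr ^ 3" using nb by simp
  also have "\<dots> = (3 ^ k * nr) ^ 3" by (simp add: power_mult_distrib)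
  finally have "n ^ 3 \<le> (3 ^ k * nr) ^ 3" .
  then have "n \<le> 3 ^ k * nr" using power_mono_iff[of n "3 ^ k * nr" 3] by simp
  with M ceq have "tf c n M" using tf_mono by metis
  then show ?thesis using tf_dec by blast
qed

theorem theorem5p5:
  fixes n :: nat
  assumes "n \<ge> 3"
  shows "real (m_star n 3) \<le> real_of_int \<lceil>(3 / log 2 3) * log 2 (real n)\<rceil>"
proof -
  define x where "x = (3 / log 2 3) * log 2 (real n)"
  have npos: "real n > 0" using assms by simp
  have xe: "x = 3 * log 3 (real n)"
    unfolding x_def using log_base_change[of 2 3 "real n"] by simp
  have "log 3 (real n) \<ge> log 3 3" using assms by simp
  then have x3: "x \<ge> 3" using xe by simp
  define c where "c = nat \<lceil>x\<rceil>"
  have cx: "real c = of_int \<lceil>x\<rceil>" unfolding c_def using x3 by simp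
  have c3: "c \<ge> 3" using x3 unfolding c_def by linarith
  have "(3::real) powr x = (3 powr log 3 (real n)) powr (real 3)"
    unfolding xe powr_powr by (simp add: mult.commute)
  also have "\<dots> = real n powr (real 3)" using npos by simp
  also have "\<dots> = real (n ^ 3)" using npos by (simp add: powr_realpow)
  finally have "real (n ^ 3) = 3 powr x" by simp
  also have "\<dots> \<le> 3 powr (real c)" using cx by (intro powr_mono) auto
  also have "\<dots> = real (3 ^ c)" by (simp add: powr_realpow)
  finally have "n ^ 3 \<le> 3 ^ c" by linarith
  then obtain M where "decodable c n 3 M" using construct c3 by blast
  then have "m_star n 3 \<le> c" unfolding m_star_def by (metis (mono_tags) Least_le)
  then show ?thesis using cx unfolding x_def by simp
qed

end
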